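(* Let $n\in\mathbb{N}$ and let $\psi$ be an increasing concave function on $[0,\infty)$ with $\psi(0)=0$. The following are equivalent: (i) $\Lambda_\psi\cap L_\infty\not\subset L_{n,1}$; (ii) $\liminf_{t\to\infty}\psi(t)/t^{1/n}=0$; (iii) $\liminf_{m\to\infty}\psi(2^{mn})/2^m=0$.
   Context: For a measurable function $f$ on $(0,\infty)$, $\mu(f)$ is the decreasing rearrangement of $|f|$. The Lorentz space $\Lambda_\psi$ is the set of measurable $f$ on $(0,\infty)$ with $\|f\|_{\Lambda_\psi}=\int_0^\infty\mu(t;f)\,d\psi(t)<\infty$; $L_{n,1}=\Lambda_\psi$ with $\psi(t)=t^{1/n}$. In (i) the inclusion is set inclusion. *)

theory Defs
  imports "HOL-Analysis.Analysis"
begin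

definition decr_rearr :: "(real \<Rightarrow> real) \<Rightarrow> real \<Rightarrow> ennreal" where
  "decr_rearr f t = Inf {s::ennreal.
      emeasure lborel {x \<in> {0<..}. s < ennreal \<bar>f x\<bar>} \<le> ennreal t}"

text \<open>Right-continuous distribution function of the Lebesgue--Stieltjes measure d psi on [0,\<infinity>):
  F(t) = psi(t+) for t \<ge> 0 and 0 for t < 0 (so a possible jump of psi at 0 gives an atom at 0).\<close>
definition stieltjes_dist :: "(real \<Rightarrow> real) \<Rightarrow> real \<Rightarrow> real" where
  "stieltjes_dist \<psi> t = (if t < 0 then 0 else Inf (\<psi> ` {t<..}))"

definition lorentz_norm :: "(real \<Rightarrow> real) \<Rightarrow> (real \<Rightarrow> real) \<Rightarrow> ennreal" where
  "lorentz_norm \<psi> f = (\<integral>\<^sup>+ t. decr_rearr f t * indicator {0..} t \<partial>interval_measure (stieltjes_dist \<psi>))"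

definition measurable_pos :: "(real \<Rightarrow> real) set" where
  "measurable_pos = borel_measurable (restrict_space lborel {0<..})"

definition Lorentz_space :: "(real \<Rightarrow> real) \<Rightarrow> (real \<Rightarrow> real) set" where
  "Lorentz_space \<psi> = {f \<in> measurable_pos. lorentz_norm \<psi> f < \<infinity>}"

definition Linfty_pos :: "(real \<Rightarrow> real) set" where
  "Linfty_pos = {f \<in> measurable_pos. \<exists>C. AE x in lborel. x > 0 \<longrightarrow> \<bar>f x\<bar> \<le> C}"

definition Lorentz_n1 :: "nat \<Rightarrow> (real \<Rightarrow> real) set" where
  "Lorentz_n1 n = Lorentz_space (\<lambda>t. t powr (1 / real n))"

end

theory Submission
  imports Defs
begin

lemma sd_lower:
  assumes "mono_on {0..} \<psi>" "t \<ge> 0"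
  shows "\<psi> t \<le> stieltjes_dist \<psi> t"
proof -
  have "\<psi> t \<le> Inf (\<psi> ` {t<..})"
    by (rule cInf_greatest) (use assms in \<open>auto intro: mono_onD\<close>)
  then show ?thesis using assms by (simp add: stieltjes_dist_def)
qed

lemma sd_upper:
  assumes "mono_on {0..} \<psi>" "t \<ge> 0" "u > t"
  shows "stieltjes_dist \<psi> t \<le> \<psi> u"
proof -
  have "bdd_below (\<psi> ` {t<..})"
    by (rule bdd_belowI[of _ "\<psi> t"]) (use assms in \<open>auto intro: mono_onD\<close>)
  then have "Inf (\<psi> ` {t<..}) \<le> \<psi> u"
    using assms by (intro cInf_lower) auto
  then show ?thesis using assms by (simp add: stieltjes_dist_def)
qed

lemma sd_mono:
  assumes "mono_on {0..} \<psi>" "\<psi> 0 = 0" "x \<le> y"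
  shows "stieltjes_dist \<psi> x \<le> stieltjes_dist \<psi> y"
proof (cases "x < 0")
  case True
  then show ?thesis
    using sd_lower[OF assms(1), of y] assms mono_onD[OF assms(1), of 0 y]
    by (auto simp: stieltjes_dist_def)
next
  case False
  have "Inf (\<psi> ` {x<..}) \<le> Inf (\<psi> ` {y<..})"
  proof (rule cInf_superset_mono)
    show "\<psi> ` {y<..} \<noteq> {}" by auto
    show "bdd_below (\<psi> ` {x<..})"
      by (rule bdd_belowI[of _ "\<psi> x"]) (use assms False in \<open>auto intro: mono_onD\<close>)
    show "\<psi> ` {y<..} \<subseteq> \<psi> ` {x<..}" using assms by auto
  qed
  then show ?thesis using False assms by (auto simp add: stieltjes_dist_def)
qed

lemma sd_rcont:
  assumes "mono_on {0..} \<psi>" "\<psi> 0 = 0"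
  shows "continuous (at_right a) (stieltjes_dist \<psi>)"
proof (cases "a < 0")
  case True
  have "eventually (\<lambda>x. stieltjes_dist \<psi> x = stieltjes_dist \<psi> a) (at_right a)"
    unfolding eventually_at_right_field
    by (rule exI[of _ 0]) (use True in \<open>auto simp: stieltjes_dist_def\<close>)
  then show ?thesis unfolding continuous_within
    by (rule tendsto_eventually)
next
  case False
  let ?F = "stieltjes_dist \<psi>"
  show ?thesis unfolding continuous_within
  proof (rule order_tendstoI)
    fix y assume "y < ?F a"
    have "eventually (\<lambda>x. ?F a \<le> ?F x) (at_right a)"
      unfolding eventually_at_right_field
      by (rule exI[of _ "a+1"]) (use assms in \<open>auto intro: sd_mono\<close>)
    then show "eventually (\<lambda>x. y < ?F x) (at_right a)"
      by eventually_elim (use \<open>y < ?F a\<close> in auto)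
  next
    fix y assume "?F a < y"
    then have "Inf (\<psi> ` {a<..}) < y" using False by (simp add: stieltjes_dist_def)
    moreover have "bdd_below (\<psi> ` {a<..})"
      by (rule bdd_belowI[of _ "\<psi> a"]) (use assms False in \<open>auto intro: mono_onD\<close>)
    ultimately obtain u where u: "u > a" "\<psi> u < y"
      by (subst (asm) cInf_less_iff) auto
    show "eventually (\<lambda>x. ?F x < y) (at_right a)"
      unfolding eventually_at_right_field
    proof (rule exI[of _ u], intro conjI allI impI)
      fix x assume "x > a" "x < u"
      then have "?F x \<le> \<psi> u" using False by (intro sd_upper[OF assms(1)]) auto
      then show "?F x < y" using u by simp
    qed (use u in auto)
  qed
qed

lemma dr_anti:
  assumes "t \<le> t'"
  shows "decr_rearr f t' \<le> decr_rearr f t"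
  unfolding decr_rearr_def
proof (rule Inf_superset_mono)
  show "{s. emeasure lborel {x \<in> {0<..}. s < ennreal \<bar>f x\<bar>} \<le> ennreal t}
    \<subseteq> {s. emeasure lborel {x \<in> {0<..}. s < ennreal \<bar>f x\<bar>} \<le> ennreal t'}"
    using assms by (auto intro: order_trans ennreal_leI)
qed

lemma antimono_ennreal_measurable:
  fixes g :: "real \<Rightarrow> ennreal"
  assumes "\<And>x y. x \<le> y \<Longrightarrow> g y \<le> g x"
  shows "g \<in> borel_measurable borel"
proof (rule borel_measurableI_greater)
  fix y
  have "is_interval {x. y < g x}"
    unfolding is_interval_1 using assms by (fastforce intro: less_le_trans)
  then show "{x \<in> space borel. y < g x} \<in> sets borel"
    using real_interval_borel_measurable by simp
qed

lemma dr_measurable: "decr_rearr f \<in> borel_measurable borel"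
  by (rule antimono_ennreal_measurable) (rule dr_anti)

lemma dr_bound:
  assumes "AE x in lborel. x > 0 \<longrightarrow> \<bar>f x\<bar> \<le> C"
  shows "decr_rearr f t \<le> ennreal (max C 0)"
  unfolding decr_rearr_def
proof (rule Inf_lower, safe)
  obtain N where N: "{x \<in> space lborel. \<not> (x > 0 \<longrightarrow> \<bar>f x\<bar> \<le> C)} \<subseteq> N" "N \<in> null_sets lborel"
    using assms unfolding eventually_ae_filter by blast
  have "{x \<in> {0<..}. ennreal (max C 0) < ennreal \<bar>f x\<bar>} \<subseteq> N"
    using N(1) by (auto simp: ennreal_less_iff)
  then have "emeasure lborel {x \<in> {0<..}. ennreal (max C 0) < ennreal \<bar>f x\<bar>} \<le> emeasure lborel N"
    using N(2) by (intro emeasure_mono) auto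
  also have "\<dots> = 0" using N(2) by auto
  finally show "emeasure lborel {x \<in> {0<..}. ennreal (max C 0) < ennreal \<bar>f x\<bar>} \<le> ennreal t"
    by simp
qed

lemma dr_upper:
  assumes anti: "\<And>x y. 0 < x \<Longrightarrow> x \<le> y \<Longrightarrow> \<bar>g y\<bar> \<le> \<bar>g x\<bar>" and t: "t > 0"
  shows "decr_rearr g t \<le> ennreal \<bar>g t\<bar>"
  unfolding decr_rearr_def
proof (rule Inf_lower, safe)
  have "{x \<in> {0<..}. ennreal \<bar>g t\<bar> < ennreal \<bar>g x\<bar>} \<subseteq> {0<..<t}"
    using anti t by (force simp: ennreal_less_iff not_le[symmetric])
  then have "emeasure lborel {x \<in> {0<..}. ennreal \<bar>g t\<bar> < ennreal \<bar>g x\<bar>} \<le> emeasure lborel {0<..<t}"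
    by (intro emeasure_mono) auto
  then show "emeasure lborel {x \<in> {0<..}. ennreal \<bar>g t\<bar> < ennreal \<bar>g x\<bar>} \<le> ennreal t"
    using t by simp
qed

lemma dr_lower:
  assumes meas: "g \<in> borel_measurable borel"
    and anti: "\<And>x y. 0 < x \<Longrightarrow> x \<le> y \<Longrightarrow> \<bar>g y\<bar> \<le> \<bar>g x\<bar>" and "0 \<le> x" "x < t"
  shows "ennreal \<bar>g t\<bar> \<le> decr_rearr g x"
  unfolding decr_rearr_def
proof (rule Inf_greatest, safe)
  fix s assume s: "emeasure lborel {y \<in> {0<..}. s < ennreal \<bar>g y\<bar>} \<le> ennreal x"
  show "ennreal \<bar>g t\<bar> \<le> s"
  proof (rule ccontr)
    assume "\<not> ennreal \<bar>g t\<bar> \<le> s"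
    then have st: "s < ennreal \<bar>g t\<bar>" by simp
    have "{0<..t} \<subseteq> {y \<in> {0<..}. s < ennreal \<bar>g y\<bar>}"
      using anti st by (auto intro: less_le_trans ennreal_leI)
    then have "emeasure lborel {0<..t} \<le> emeasure lborel {y \<in> {0<..}. s < ennreal \<bar>g y\<bar>}"
      by (intro emeasure_mono) (use meas in measurable)
    moreover have "emeasure lborel {0<..t} = ennreal t" using assms by simp
    ultimately have "ennreal t \<le> ennreal x" using s by (metis order_trans)
    then show False using assms by (simp add: ennreal_le_iff)
  qed
qed

lemma layer_cake:
  assumes sf: "sigma_finite_measure M" and h[measurable]: "h \<in> borel_measurable M"
  shows "(\<integral>\<^sup>+t. h t \<partial>M) = (\<integral>\<^sup>+s. emeasure M {t \<in> space M. ennreal s < h t} * indicator {0..} s \<partial>lborel)"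
proof -
  interpret M: sigma_finite_measure M by (rule sf)
  interpret P: pair_sigma_finite M lborel ..
  let ?G = "\<lambda>t s. indicator {s. ennreal s < h t} s * indicator {0..} s :: ennreal"
  have 1: "h t = (\<integral>\<^sup>+s. ?G t s \<partial>lborel)" for t
  proof -
    have "(\<integral>\<^sup>+s. ?G t s \<partial>lborel) = (\<integral>\<^sup>+s. indicator ({s. ennreal s < h t} \<inter> {0..}) s \<partial>lborel)"
      by (intro nn_integral_cong) (auto split: split_indicator)
    also have "\<dots> = h t"
    proof (cases "h t")
      case (real r)
      then have "{s. ennreal s < h t} \<inter> {0..} = {0..<r}"
        by (auto simp: ennreal_less_iff)
      then show ?thesis using real by simp
    next
      case top
      then have "{s. ennreal s < h t} \<inter> {0..} = {0..}" by auto
      moreover have "emeasure lborel {0::real..} = \<infinity>"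
      proof (rule ccontr)
        assume "emeasure lborel {0::real..} \<noteq> \<infinity>"
        then obtain r where r: "emeasure lborel {0::real..} = ennreal r" "r \<ge> 0"
          by (cases "emeasure lborel {0::real..}") auto
        have "emeasure lborel {0::real..r+1} \<le> emeasure lborel {0::real..}"
          by (intro emeasure_mono) auto
        then show False using r by (simp add: ennreal_le_iff)
      qed
      ultimately show ?thesis using top by simp
    qed
    finally show ?thesis by simp
  qed
  have "(\<integral>\<^sup>+t. h t \<partial>M) = (\<integral>\<^sup>+t. (\<integral>\<^sup>+s. ?G t s \<partial>lborel) \<partial>M)"
    by (subst 1) simp
  also have "\<dots> = (\<integral>\<^sup>+s. (\<integral>\<^sup>+t. ?G t s \<partial>M) \<partial>lborel)"
    by (rule P.Fubini'[symmetric]) measurable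
  also have "\<dots> = (\<integral>\<^sup>+s. emeasure M {t \<in> space M. ennreal s < h t} * indicator {0..} s \<partial>lborel)"
  proof (rule nn_integral_cong)
    fix s
    have "(\<integral>\<^sup>+t. ?G t s \<partial>M) = (\<integral>\<^sup>+t. indicator {t \<in> space M. ennreal s < h t} t * indicator {0..} s \<partial>M)"
      by (intro nn_integral_cong) (auto split: split_indicator)
    also have "\<dots> = emeasure M {t \<in> space M. ennreal s < h t} * indicator {0..} s"
      by (subst nn_integral_multc) (auto)
    finally show "(\<integral>\<^sup>+t. ?G t s \<partial>M) = emeasure M {t \<in> space M. ennreal s < h t} * indicator {0..} s" .
  qed
  finally show ?thesis .
qed

lemma Liminf_pos_iff:
  fixes X :: "'a \<Rightarrow> ereal"
  assumes "F \<noteq> bot"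
  shows "0 < Liminf F X \<longleftrightarrow> (\<exists>c>0. eventually (\<lambda>x. ereal c < X x) F)"
proof
  assume "0 < Liminf F X"
  then obtain d where d: "0 < d" "d < Liminf F X" using ereal_dense2 by (metis dense ereal_less(2) less_ereal.simps)
  then obtain c :: real where c: "0 < c" "ereal c < Liminf F X"
  proof (cases d)
    case (real r) then show ?thesis using d that by auto
  next
    case PInf then show ?thesis using d that[of 1] by auto
  qed (use d in auto)
  then have "eventually (\<lambda>x. ereal c < X x) F"
    using less_LiminfD by blast
  then show "\<exists>c>0. eventually (\<lambda>x. ereal c < X x) F" using c by blast
next
  assume "\<exists>c>0. eventually (\<lambda>x. ereal c < X x) F"
  then obtain c where c: "c > 0" "eventually (\<lambda>x. ereal c < X x) F" by blast
  have "ereal c \<le> Liminf F X"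
    by (rule Liminf_bounded) (use c(2) in \<open>auto elim: eventually_mono\<close>)
  then show "0 < Liminf F X" using c by (meson ereal_less(2) less_le_trans)
qed

lemma Liminf_zero_iff:
  fixes X :: "'a \<Rightarrow> ereal"
  assumes "F \<noteq> bot" "eventually (\<lambda>x. 0 \<le> X x) F"
  shows "Liminf F X = 0 \<longleftrightarrow> \<not> (\<exists>c>0. eventually (\<lambda>x. ereal c < X x) F)"
proof -
  have "0 \<le> Liminf F X" by (rule Liminf_bounded) (use assms in auto)
  then show ?thesis using Liminf_pos_iff[OF assms(1), of X] by auto
qed

lemma gh_equiv:
  fixes \<psi> :: "real \<Rightarrow> real" and n :: nat
  assumes n: "n \<ge> 1" and mono: "mono_on {0..} \<psi>" and z: "\<psi> 0 = 0"
  shows "(\<exists>c>0. eventually (\<lambda>t. c < \<psi> t / t powr (1 / real n)) at_top)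
     \<longleftrightarrow> (\<exists>c>0. eventually (\<lambda>m. c < \<psi> (2 ^ (m * n)) / 2 ^ m) sequentially)"
proof
  have pw: "(2 ^ (m * n) :: real) powr (1 / real n) = 2 ^ m" for m
  proof -
    have "(2 ^ (m * n) :: real) powr (1 / real n) = (2 powr real (m * n)) powr (1 / real n)"
      by (subst powr_realpow[symmetric]) auto
    also have "\<dots> = 2 powr real m" using n by (simp add: powr_powr)
    also have "\<dots> = 2 ^ m" by (simp add: powr_realpow)
    finally show ?thesis .
  qed
  assume "\<exists>c>0. eventually (\<lambda>t. c < \<psi> t / t powr (1 / real n)) at_top"
  then obtain c T where c: "c > 0" "\<And>t. t \<ge> T \<Longrightarrow> c < \<psi> t / t powr (1 / real n)"
    by (auto simp: eventually_at_top_linorder)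
  have "eventually (\<lambda>m. c < \<psi> (2 ^ (m * n)) / 2 ^ m) sequentially"
    unfolding eventually_sequentially
  proof (intro exI[of _ "nat \<lceil>T\<rceil>"] allI impI)
    fix m assume m: "nat \<lceil>T\<rceil> \<le> m"
    have "T \<le> real m" using m by linarith
    also have "real m \<le> 2 ^ m" using less_exp[of m]
      by (metis less_imp_le of_nat_le_iff of_nat_numeral of_nat_power)
    also have "(2::real) ^ m \<le> 2 ^ (m * n)" using n by (intro power_increasing) auto
    finally have "c < \<psi> (2 ^ (m * n)) / (2 ^ (m * n)) powr (1 / real n)" by (rule c(2))
    then show "c < \<psi> (2 ^ (m * n)) / 2 ^ m" by (simp only: pw)
  qed
  then show "\<exists>c>0. eventually (\<lambda>m. c < \<psi> (2 ^ (m * n)) / 2 ^ m) sequentially" using c by blast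
next
  assume "\<exists>c>0. eventually (\<lambda>m. c < \<psi> (2 ^ (m * n)) / 2 ^ m) sequentially"
  then obtain c M where c: "c > 0" "\<And>m. m \<ge> M \<Longrightarrow> c < \<psi> (2 ^ (m * n)) / 2 ^ m"
    by (auto simp: eventually_sequentially)
  have "eventually (\<lambda>t. c / 2 < \<psi> t / t powr (1 / real n)) at_top"
    unfolding eventually_at_top_linorder
  proof (intro exI[of _ "2 ^ (M * n)"] allI impI)
    fix t :: real assume t: "2 ^ (M * n) \<le> t"
    have t1: "1 \<le> t" using t by (metis one_le_numeral one_le_power order_trans)
    define m where "m = nat \<lfloor>log 2 t / real n\<rfloor>"
    have lg: "0 \<le> log 2 t" using t1 by simp
    have nn: "real n > 0" using n by simp
    have m1: "real m \<le> log 2 t / real n" using lg nn unfolding m_def by simp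
    have m2: "log 2 t / real n < real m + 1" using lg nn unfolding m_def by linarith
    have "real (M * n) \<le> log 2 t"
    proof -
      have "log 2 (2 ^ (M * n)) \<le> log 2 t" using t t1 by (subst log_le_cancel_iff) auto
      then show ?thesis by (simp add: log_nat_power)
    qed
    then have "real M \<le> log 2 t / real n" using nn by (simp add: field_simps)
    then have mM: "M \<le> m" unfolding m_def by (simp add: le_nat_floor)
    have a1: "2 ^ (m * n) \<le> t"
    proof -
      have r: "real (m * n) \<le> log 2 t" using m1 nn by (simp add: field_simps)
      have "(2::real) ^ (m * n) = 2 powr real (m * n)" by (rule powr_realpow[symmetric]) simp
      also have "\<dots> \<le> 2 powr (log 2 t)" using r by (rule powr_mono) simp
      also have "\<dots> = t" using t1 by simp
      finally show ?thesis .
    qed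
    have a2: "t powr (1 / real n) < 2 ^ (m + 1)"
    proof -
      have "log 2 t < real n * (real m + 1)" using m2 nn by (simp add: field_simps)
      then have "2 powr (log 2 t) < 2 powr (real n * (real m + 1))"
        by (rule powr_less_mono) simp
      then have "t < 2 powr (real n * (real m + 1))" using t1 by simp
      then have "t powr (1 / real n) < (2 powr (real n * (real m + 1))) powr (1 / real n)"
        using t1 nn by (intro powr_less_mono2) auto
      also have "\<dots> = 2 powr (real m + 1)" using nn by (simp add: powr_powr)
      also have "\<dots> = 2 ^ (m + 1)" using powr_realpow[of "2::real" "m + 1"] by (simp add: add.commute)
      finally show ?thesis .
    qed
    have tp: "0 < t powr (1 / real n)" using t1 by simp
    have psi0: "0 \<le> \<psi> (2 ^ (m * n))" using mono_onD[OF mono, of 0 "2 ^ (m * n)"] z by simp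
    have "c / 2 < \<psi> (2 ^ (m * n)) / 2 ^ m / 2" using c(2)[OF mM] by simp
    also have "\<dots> = \<psi> (2 ^ (m * n)) / 2 ^ (m + 1)" by simp
    also have "\<dots> \<le> \<psi> (2 ^ (m * n)) / t powr (1 / real n)"
      using a2 tp psi0 by (intro divide_left_mono) auto
    also have "\<dots> \<le> \<psi> t / t powr (1 / real n)"
      using a1 tp t1 mono by (intro divide_right_mono mono_onD[OF mono]) auto
    finally show "c / 2 < \<psi> t / t powr (1 / real n)" .
  qed
  then show "\<exists>c>0. eventually (\<lambda>t. c < \<psi> t / t powr (1 / real n)) at_top"
    using c by (intro exI[of _ "c/2"]) auto
qed

lemma sd_props:
  assumes "mono_on {0..} \<psi>" "\<psi> 0 = 0"
  shows "\<And>x y. x \<le> y \<Longrightarrow> stieltjes_dist \<psi> x \<le> stieltjes_dist \<psi> y"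
    and "\<And>a. continuous (at_right a) (stieltjes_dist \<psi>)"
    and "sigma_finite_measure (interval_measure (stieltjes_dist \<psi>))"
  using sd_mono[OF assms] sd_rcont[OF assms] by (auto intro!: sigma_finite_interval_measure)

lemma sd_Ioc:
  assumes "mono_on {0..} \<psi>" "\<psi> 0 = 0" "a \<le> b"
  shows "emeasure (interval_measure (stieltjes_dist \<psi>)) {a<..b} = ennreal (stieltjes_dist \<psi> b - stieltjes_dist \<psi> a)"
  using emeasure_interval_measure_Ioc[OF assms(3) sd_props(1,2)[OF assms(1,2)]] by simp

lemma pw_mono: "p \<ge> 0 \<Longrightarrow> mono_on {0..} (\<lambda>t::real. t powr p)"
  by (auto intro!: mono_onI powr_mono2)

lemma seg_bound:
  fixes \<psi> :: "real \<Rightarrow> real" and n :: nat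
  defines "p \<equiv> 1 / real n"
  assumes n: "n \<ge> 1" and mono: "mono_on {0..} \<psi>" and z: "\<psi> 0 = 0"
    and c: "c > 0" and T: "T \<ge> 1" and cT: "\<And>t. t \<ge> T \<Longrightarrow> c * t powr p < \<psi> t"
    and A: "A \<in> sets borel" "\<And>t. t \<in> A \<Longrightarrow> 0 \<le> t" "\<And>t u. t \<in> A \<Longrightarrow> 0 \<le> u \<Longrightarrow> u \<le> t \<Longrightarrow> u \<in> A"
  shows "emeasure (interval_measure (stieltjes_dist (\<lambda>t. t powr p))) A
     \<le> ennreal (2 * T powr p + 2 * \<psi> 1 / c) + ennreal (2 / c) * emeasure (interval_measure (stieltjes_dist \<psi>)) A"
proof (cases "emeasure (interval_measure (stieltjes_dist \<psi>)) A")
  case top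
  then show ?thesis using c by (simp add: ennreal_mult_top)
next
  case (real V)
  let ?F = "stieltjes_dist \<psi>" and ?G = "stieltjes_dist (\<lambda>t. t powr p)"
  have p0: "p > 0" and p1: "p \<le> 1" using n by (auto simp: p_def)
  have pm: "mono_on {0..} (\<lambda>t::real. t powr p)" using p0 by (intro pw_mono) simp
  have pz: "(\<lambda>t::real. t powr p) 0 = 0" by simp
  define B where "B = T powr p + (V + \<psi> 1) / c"
  have F0: "?F 0 \<le> \<psi> 1" by (rule sd_upper[OF mono]) auto
  have psi1: "0 \<le> \<psi> 1" using mono_onD[OF mono, of 0 1] z by simp
  have TB: "T powr p \<le> B" using real psi1 c unfolding B_def by simp
  have bnd: "t powr p \<le> B" if t: "t \<in> A" for t
  proof -
    have t0: "0 \<le> t" using A(2)[OF t] .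
    have "{0<..t} \<subseteq> A" using A(3)[OF t] by auto
    then have "emeasure (interval_measure ?F) {0<..t} \<le> emeasure (interval_measure ?F) A"
      using A(1) by (intro emeasure_mono) auto
    then have "ennreal (?F t - ?F 0) \<le> ennreal V" using sd_Ioc[OF mono z t0] real by simp
    then have "?F t - ?F 0 \<le> V" using real by (simp add: ennreal_le_iff)
    moreover have "\<psi> t \<le> ?F t" by (rule sd_lower[OF mono t0])
    ultimately have pt: "\<psi> t \<le> V + \<psi> 1" using F0 by simp
    show ?thesis
    proof (cases "t \<ge> T")
      case True
      then have "c * t powr p < V + \<psi> 1" using cT[OF True] pt by simp
      then have "t powr p \<le> (V + \<psi> 1) / c" using c by (simp add: field_simps)
      then show ?thesis using TB unfolding B_def by (smt (verit) powr_ge_zero)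
    next
      case False
      then have "t powr p \<le> T powr p" using t0 p0 by (intro powr_mono2) auto
      then show ?thesis using TB by simp
    qed
  qed
  define Y where "Y = B powr real n"
  have B1: "1 \<le> B" using TB T p0 by (smt (verit) ge_one_powr_ge_zero)
  have Y1: "1 \<le> Y" unfolding Y_def by (rule ge_one_powr_ge_zero[OF B1]) simp
  have YB: "Y powr p = B" unfolding Y_def p_def using n B1 by (simp add: powr_powr)
  have "A \<subseteq> {-1<..Y}"
  proof
    fix t assume t: "t \<in> A"
    have t0: "0 \<le> t" using A(2)[OF t] .
    have "t = (t powr p) powr real n" using n t0 unfolding p_def by (simp add: powr_powr)
    also have "\<dots> \<le> B powr real n" using bnd[OF t] by (intro powr_mono2) auto
    finally show "t \<in> {-1<..Y}" using t0 unfolding Y_def by simp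
  qed
  then have "emeasure (interval_measure ?G) A \<le> emeasure (interval_measure ?G) {-1<..Y}"
    by (intro emeasure_mono) auto
  also have "\<dots> = ennreal (?G Y - ?G (-1))" using Y1 by (intro sd_Ioc[OF pm pz]) auto
  also have "?G (-1) = 0" by (simp add: stieltjes_dist_def)
  also have "?G Y \<le> (2 * Y) powr p" using Y1 by (intro sd_upper[OF pm]) auto
  also have "(2 * Y) powr p = 2 powr p * B" using Y1 by (simp add: powr_mult YB)
  also have "2 powr p * B \<le> 2 * B"
  proof -
    have "2 powr p \<le> (2::real) powr 1" using p1 by (intro powr_mono) auto
    then show ?thesis using B1 by simp
  qed
  finally have "emeasure (interval_measure ?G) A \<le> ennreal (2 * B)" by (simp add: ennreal_leI)
  also have "2 * B = (2 * T powr p + 2 * \<psi> 1 / c) + (2 / c) * V"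
    unfolding B_def using c by (simp add: field_simps)
  also have "ennreal \<dots> = ennreal (2 * T powr p + 2 * \<psi> 1 / c) + ennreal (2 / c) * ennreal V"
  proof -
    have "ennreal ((2 * T powr p + 2 * \<psi> 1 / c) + (2 / c) * V) = ennreal (2 * T powr p + 2 * \<psi> 1 / c) + ennreal ((2 / c) * V)"
      using c psi1 real by (intro ennreal_plus) auto
    also have "ennreal ((2 / c) * V) = ennreal (2 / c) * ennreal V"
      using c real by (intro ennreal_mult) auto
    finally show ?thesis .
  qed
  finally show ?thesis using real by simp
qed

lemma incl:
  fixes \<psi> :: "real \<Rightarrow> real" and n :: nat
  assumes n: "n \<ge> 1" and mono: "mono_on {0..} \<psi>" and z: "\<psi> 0 = 0"
    and c: "c > 0" and T: "T \<ge> 1" and cT: "\<And>t. t \<ge> T \<Longrightarrow> c * t powr (1 / real n) < \<psi> t"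
    and fin: "lorentz_norm \<psi> f < \<infinity>" and bd: "AE x in lborel. x > 0 \<longrightarrow> \<bar>f x\<bar> \<le> C"
  shows "lorentz_norm (\<lambda>t. t powr (1 / real n)) f < \<infinity>"
proof -
  define p where "p = 1 / real n"
  have p0: "p > 0" using n by (simp add: p_def)
  have pm: "mono_on {0..} (\<lambda>t::real. t powr p)" using p0 by (intro pw_mono) simp
  have pz: "(\<lambda>t::real. t powr p) 0 = 0" by simp
  let ?F = "stieltjes_dist \<psi>" and ?G = "stieltjes_dist (\<lambda>t. t powr p)"
  define h where "h t = decr_rearr f t * indicator {0..} t" for t
  have hm[measurable]: "h \<in> borel_measurable borel"
    unfolding h_def using dr_measurable by measurable
  define M where "M = max C 0"
  have hM: "h t \<le> ennreal M" for t
    using dr_bound[OF bd, of t] unfolding h_def M_def by (auto split: split_indicator)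
  define K where "K = 2 * T powr p + 2 * \<psi> 1 / c"
  have K0: "0 \<le> K" unfolding K_def using c mono_onD[OF mono, of 0 1] z by simp
  let ?A = "\<lambda>s. {t. ennreal s < h t}"
  have LCF: "lorentz_norm \<psi> f = (\<integral>\<^sup>+s. emeasure (interval_measure ?F) (?A s) * indicator {0..} s \<partial>lborel)"
    unfolding lorentz_norm_def h_def[symmetric]
    by (subst layer_cake[OF sd_props(3)[OF mono z]]) (auto simp: hm)
  have LCG: "lorentz_norm (\<lambda>t. t powr p) f = (\<integral>\<^sup>+s. emeasure (interval_measure ?G) (?A s) * indicator {0..} s \<partial>lborel)"
    unfolding lorentz_norm_def h_def[symmetric]
    by (subst layer_cake[OF sd_props(3)[OF pm pz]]) (auto simp: hm)
  have pt: "emeasure (interval_measure ?G) (?A s) * indicator {0..} s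
      \<le> ennreal K * indicator {0..<M} s + ennreal (2 / c) * (emeasure (interval_measure ?F) (?A s) * indicator {0..} s)" for s
  proof (cases "0 \<le> s \<and> s < M")
    case True
    have "emeasure (interval_measure ?G) (?A s) \<le> ennreal K + ennreal (2 / c) * emeasure (interval_measure ?F) (?A s)"
      unfolding K_def p_def
    proof (rule seg_bound[OF n mono z c T])
      show "c * t powr (1 / real n) < \<psi> t" if "t \<ge> T" for t using cT that .
      show "?A s \<in> sets borel" by measurable
      show "0 \<le> t" if "t \<in> ?A s" for t using that unfolding h_def by (auto split: split_indicator_asm)
      show "u \<in> ?A s" if "t \<in> ?A s" "0 \<le> u" "u \<le> t" for t u
        using that dr_anti[of u t f] unfolding h_def by (auto split: split_indicator_asm intro: less_le_trans)
    qed
    then show ?thesis using True by simp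
  next
    case False
    then have "s < 0 \<or> M \<le> s" by auto
    then have "emeasure (interval_measure ?G) (?A s) * indicator {0..} s = 0"
    proof
      assume "M \<le> s"
      then have "?A s = {}" using hM by (auto intro: order.trans dest: ennreal_leI simp: not_less)
      then show ?thesis by simp
    qed simp
    then show ?thesis by (metis zero_le)
  qed
  have "lorentz_norm (\<lambda>t. t powr p) f \<le> (\<integral>\<^sup>+s. ennreal K * indicator {0..<M} s + ennreal (2 / c) * (emeasure (interval_measure ?F) (?A s) * indicator {0..} s) \<partial>lborel)"
    unfolding LCG by (rule nn_integral_mono) (rule pt)
  also have "\<dots> = ennreal K * emeasure lborel {0..<M} + ennreal (2 / c) * lorentz_norm \<psi> f"
  proof -
    have mA: "?A s \<in> sets borel" for s by measurable
    have mF[measurable]: "(\<lambda>s. emeasure (interval_measure ?F) (?A s)) \<in> borel_measurable borel"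
      by (rule antimono_ennreal_measurable, rule emeasure_mono)
         (auto intro: le_less_trans ennreal_leI simp: mA)
    show ?thesis unfolding LCF
      by (subst nn_integral_add) (auto simp: nn_integral_cmult_indicator nn_integral_cmult)
  qed
  also have "\<dots> < \<infinity>"
  proof -
    have "0 \<le> M" unfolding M_def by simp
    then show ?thesis using fin by (simp add: ennreal_mult_less_top)
  qed
  finally show ?thesis unfolding p_def .
qed

lemma nonincl:
  fixes \<psi> :: "real \<Rightarrow> real" and n :: nat
  assumes n: "n \<ge> 1" and mono: "mono_on {0..} \<psi>" and z: "\<psi> 0 = 0"
    and H: "\<And>c T. c > 0 \<Longrightarrow> \<exists>t\<ge>T. \<psi> t / t powr (1 / real n) \<le> c"
  shows "\<not> (Lorentz_space \<psi> \<inter> Linfty_pos \<subseteq> Lorentz_n1 n)"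
proof -
  define p where "p = 1 / real n"
  have p0: "p > 0" and p1: "p \<le> 1" using n by (auto simp: p_def)
  have pm: "mono_on {0..} (\<lambda>t::real. t powr p)" using p0 by (intro pw_mono) simp
  have pz: "(\<lambda>t::real. t powr p) 0 = 0" by simp
  let ?F = "stieltjes_dist \<psi>" and ?G = "stieltjes_dist (\<lambda>t. t powr p)"
  have "\<forall>k::nat. \<exists>t. t \<ge> 2 * 4 ^ (k * n) \<and> \<psi> t / t powr p \<le> (1/4) ^ k"
    using H unfolding p_def by simp
  then obtain s where s: "\<And>k. s k \<ge> 2 * 4 ^ (k * n)" "\<And>k. \<psi> (s k) / s k powr p \<le> (1/4) ^ k"
    by metis
  define t where "t k = s k / 2" for k
  define a where "a k = 2 ^ k / t k powr p" for k
  have t4: "t k \<ge> 4 ^ (k * n)" for k using s(1)[of k] unfolding t_def by simp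
  have t1: "t k \<ge> 1" for k using t4[of k] by (metis one_le_numeral one_le_power order_trans)
  have tp: "t k powr p \<ge> 4 ^ k" for k
  proof -
    have "(4::real) ^ k = (4 ^ (k * n)) powr p"
    proof -
      have "(4 ^ (k * n) :: real) powr p = (4 powr real (k * n)) powr p"
        by (subst powr_realpow[symmetric]) auto
      also have "\<dots> = 4 powr real k" using n by (simp add: powr_powr p_def)
      also have "\<dots> = 4 ^ k" by (simp add: powr_realpow)
      finally show ?thesis by simp
    qed
    also have "\<dots> \<le> t k powr p" using t4[of k] p0 by (intro powr_mono2) auto
    finally show ?thesis .
  qed
  have tpp: "t k powr p > 0" for k using t1[of k] by simp
  have a0: "a k > 0" for k unfolding a_def using tpp[of k] by simp
  have ale: "a k \<le> (1/2) ^ k" for k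
  proof -
    have "a k \<le> 2 ^ k / 4 ^ k" unfolding a_def using tp[of k] by (intro divide_left_mono) (auto intro: mult_pos_pos tpp)
    also have "(2::real) ^ k / 4 ^ k = (1/2) ^ k" by (simp add: power_divide[symmetric])
    finally show ?thesis .
  qed
  have apsi: "a k * \<psi> (s k) \<le> 2 * (1/2) ^ k" for k
  proof -
    have sk: "s k = 2 * t k" unfolding t_def by simp
    have spos: "s k powr p > 0" using t1[of k] sk by simp
    have ps: "\<psi> (s k) \<le> (1/4) ^ k * s k powr p" using s(2)[of k] spos by (simp add: divide_le_eq)
    have "s k powr p = 2 powr p * t k powr p" using t1[of k] sk by (simp add: powr_mult)
    also have "\<dots> \<le> 2 * t k powr p"
    proof -
      have "2 powr p \<le> (2::real) powr 1" using p1 by (intro powr_mono) auto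
      then show ?thesis using tpp[of k] by simp
    qed
    finally have sp: "s k powr p \<le> 2 * t k powr p" .
    have "a k * \<psi> (s k) \<le> a k * ((1/4) ^ k * (2 * t k powr p))"
      using ps sp a0[of k] by (intro mult_left_mono) (auto intro: order_trans)
    also have "\<dots> = 2 * (2 ^ k * (1/4) ^ k)" unfolding a_def using tpp[of k] by simp
    also have "(2::real) ^ k * (1/4) ^ k = (1/2) ^ k" by (simp add: power_mult_distrib[symmetric])
    finally show ?thesis .
  qed
  define fE where "fE x = (\<Sum>k. ennreal (a k) * indicator {0<..t k} x)" for x
  define f where "f x = enn2real (fE x)" for x
  have fE2: "fE x \<le> ennreal 2" for x
  proof -
    have "fE x \<le> (\<Sum>k. ennreal ((1/2) ^ k))"
      unfolding fE_def using ale by (intro suminf_le) (auto split: split_indicator intro: ennreal_leI)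
    also have "\<dots> = ennreal (\<Sum>k. (1/2) ^ k)" by (intro suminf_ennreal2) auto
    also have "(\<Sum>k. (1/2::real) ^ k) = 2" using suminf_geometric[of "1/2::real"] by simp
    finally show ?thesis .
  qed
  have fEtop: "fE x < top" for x
  proof -
    have "ennreal 2 < top" by simp
    then show ?thesis using fE2[of x] by (rule le_less_trans[rotated])
  qed
  have fEf: "ennreal (f x) = fE x" for x
    unfolding f_def using fEtop[of x] by (intro ennreal_enn2real) auto
  have f0: "0 \<le> f x" for x unfolding f_def by simp
  have fabs: "\<bar>f x\<bar> = f x" for x using f0[of x] by simp
  have fE_anti: "fE y \<le> fE x" if "0 < x" "x \<le> y" for x y
    unfolding fE_def using that by (intro suminf_le) (auto split: split_indicator)
  have f_anti: "\<bar>f y\<bar> \<le> \<bar>f x\<bar>" if "0 < x" "x \<le> y" for x y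
  proof -
    have "enn2real (fE y) \<le> enn2real (fE x)" using fE_anti[OF that] fEtop[of x] by (rule enn2real_mono)
    then show ?thesis unfolding fabs unfolding f_def .
  qed
  have fm[measurable]: "f \<in> borel_measurable borel"
    unfolding f_def fE_def by measurable
  have f_meas: "f \<in> measurable_pos"
    unfolding measurable_pos_def by (rule measurable_restrict_space1) simp
  have f_bd: "\<bar>f x\<bar> \<le> 2" for x
  proof -
    have "ennreal (f x) \<le> ennreal 2" using fEf[of x] fE2[of x] by simp
    then have "f x \<le> 2" by (subst (asm) ennreal_le_iff) auto
    then show ?thesis using fabs[of x] by simp
  qed
  have f_inf: "f \<in> Linfty_pos"
    unfolding Linfty_pos_def using f_meas f_bd by (auto intro!: exI[of _ 2])
  have ftk: "a k \<le> f (t k)" for k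
  proof -
    have "ennreal (a k) = ennreal (a k) * indicator {0<..t k} (t k)" using t1[of k] by simp
    also have "\<dots> \<le> (\<Sum>j<Suc k. ennreal (a j) * indicator {0<..t j} (t k))"
      by (rule member_le_sum[where f = "\<lambda>j. ennreal (a j) * indicator {0<..t j} (t k)"]) auto
    also have "\<dots> \<le> fE (t k)" unfolding fE_def by (rule sum_le_suminf) auto
    finally have "ennreal (a k) \<le> ennreal (f (t k))" using fEf[of "t k"] by simp
    then show ?thesis using f0[of "t k"] by (simp add: ennreal_le_iff)
  qed
  have F_fin: "lorentz_norm \<psi> f < \<infinity>"
  proof -
    have bdAE: "AE x in lborel. x > 0 \<longrightarrow> \<bar>f x\<bar> \<le> 2" using f_bd by simp
    have pt: "decr_rearr f x * indicator {0..} x \<le> ennreal 2 * indicator {0} x + fE x" for x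
    proof (cases "x > 0")
      case True
      have "decr_rearr f x \<le> ennreal \<bar>f x\<bar>" by (rule dr_upper[OF f_anti True])
      then show ?thesis using True fEf[of x] fabs[of x] by (auto split: split_indicator intro: add_increasing)
    next
      case False
      show ?thesis
      proof (cases "x = 0")
        case True
        then show ?thesis using dr_bound[OF bdAE, of x] by (auto split: split_indicator intro: add_increasing2)
      qed (use False in \<open>auto split: split_indicator\<close>)
    qed
    have "lorentz_norm \<psi> f \<le> (\<integral>\<^sup>+x. ennreal 2 * indicator {0} x + fE x \<partial>interval_measure ?F)"
      unfolding lorentz_norm_def by (rule nn_integral_mono) (rule pt)
    also have "\<dots> = ennreal 2 * emeasure (interval_measure ?F) {0} + (\<Sum>k. ennreal (a k) * emeasure (interval_measure ?F) {0<..t k})"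
      unfolding fE_def
      by (subst nn_integral_add) (auto simp: nn_integral_suminf nn_integral_cmult_indicator)
    also have "\<dots> < \<infinity>"
    proof -
      have "emeasure (interval_measure ?F) {0} \<le> emeasure (interval_measure ?F) {-1<..0}"
        by (intro emeasure_mono) auto
      also have "\<dots> < \<infinity>" using sd_Ioc[OF mono z, of "-1" 0] by simp
      finally have 1: "emeasure (interval_measure ?F) {0} < \<infinity>" .
      have "(\<Sum>k. ennreal (a k) * emeasure (interval_measure ?F) {0<..t k}) \<le> (\<Sum>k. ennreal (2 * (1/2) ^ k))"
      proof (intro suminf_le)
        fix k
        have tk0: "0 \<le> t k" using t1[of k] by simp
        have "?F (t k) \<le> \<psi> (s k)" using t1[of k] unfolding t_def by (intro sd_upper[OF mono]) auto
        moreover have "0 \<le> ?F 0" using sd_lower[OF mono, of 0] z by simp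
        ultimately have "?F (t k) - ?F 0 \<le> \<psi> (s k)" by simp
        then have "ennreal (a k) * emeasure (interval_measure ?F) {0<..t k} \<le> ennreal (a k) * ennreal (\<psi> (s k))"
          using sd_Ioc[OF mono z tk0] by (auto intro!: mult_left_mono ennreal_leI)
        also have "\<dots> = ennreal (a k * \<psi> (s k))" using a0[of k] by (intro ennreal_mult'[symmetric]) auto
        also have "\<dots> \<le> ennreal (2 * (1/2) ^ k)" by (rule ennreal_leI) (rule apsi)
        finally show "ennreal (a k) * emeasure (interval_measure ?F) {0<..t k} \<le> ennreal (2 * (1/2) ^ k)" .
      qed (rule summableI)+
      also have "\<dots> < \<infinity>"
      proof -
        have sg: "summable (\<lambda>k. 2 * (1/2::real) ^ k)" by (intro summable_mult summable_geometric) simp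
        have "(\<Sum>k. ennreal (2 * (1/2::real) ^ k)) \<noteq> top" by (rule ennreal_suminf_neq_top[OF sg]) simp
        then show ?thesis by (simp add: less_top)
      qed
      finally have 2: "(\<Sum>k. ennreal (a k) * emeasure (interval_measure ?F) {0<..t k}) < \<infinity>" .
      show ?thesis using 1 2 by (simp add: ennreal_mult_less_top)
    qed
    finally show ?thesis .
  qed
  define c0 where "c0 = 1 / 2 powr p - 1 / 3 powr p"
  have c0: "c0 > 0"
  proof -
    have "(2::real) powr p < 3 powr p" using p0 by (intro powr_less_mono2) auto
    then show ?thesis unfolding c0_def by (simp add: frac_less2)
  qed
  have lowb: "ennreal (2 ^ k * c0) \<le> lorentz_norm (\<lambda>t. t powr p) f" for k
  proof -
    have tk0: "0 < t k" using t1[of k] by simp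
    have pt: "ennreal (f (t k)) * indicator {t k / 4<..t k / 2} x \<le> decr_rearr f x * indicator {0..} x" for x
    proof (cases "x \<in> {t k / 4<..t k / 2}")
      case True
      then have "0 \<le> x" "x < t k" using tk0 by auto
      then have "ennreal \<bar>f (t k)\<bar> \<le> decr_rearr f x" by (intro dr_lower[OF fm f_anti]) auto
      then show ?thesis using True \<open>0 \<le> x\<close> fabs by auto
    qed auto
    have "(\<integral>\<^sup>+x. ennreal (f (t k)) * indicator {t k / 4<..t k / 2} x \<partial>interval_measure ?G) \<le> lorentz_norm (\<lambda>t. t powr p) f"
      unfolding lorentz_norm_def by (rule nn_integral_mono) (rule pt)
    moreover have "(\<integral>\<^sup>+x. ennreal (f (t k)) * indicator {t k / 4<..t k / 2} x \<partial>interval_measure ?G)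
        = ennreal (f (t k)) * ennreal (?G (t k / 2) - ?G (t k / 4))"
      using tk0 by (simp add: nn_integral_cmult_indicator sd_Ioc[OF pm pz])
    moreover have "ennreal (2 ^ k * c0) \<le> ennreal (f (t k)) * ennreal (?G (t k / 2) - ?G (t k / 4))"
    proof -
      have g1: "(t k / 2) powr p \<le> ?G (t k / 2)" using tk0 by (intro sd_lower[OF pm]) auto
      have g2: "?G (t k / 4) \<le> (t k / 3) powr p" using tk0 by (intro sd_upper[OF pm]) auto
      have "t k powr p * c0 = (t k / 2) powr p - (t k / 3) powr p"
        unfolding c0_def using tk0 by (simp add: powr_divide field_simps)
      also have "\<dots> \<le> ?G (t k / 2) - ?G (t k / 4)" using g1 g2 by simp
      finally have D: "t k powr p * c0 \<le> ?G (t k / 2) - ?G (t k / 4)" .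
      have "2 ^ k * c0 = a k * (t k powr p * c0)" unfolding a_def using tpp[of k] by simp
      also have "\<dots> \<le> f (t k) * (?G (t k / 2) - ?G (t k / 4))"
        using ftk[of k] D a0[of k] c0 tpp[of k] by (intro mult_mono) auto
      finally have "ennreal (2 ^ k * c0) \<le> ennreal (f (t k) * (?G (t k / 2) - ?G (t k / 4)))"
        by (rule ennreal_leI)
      also have "\<dots> = ennreal (f (t k)) * ennreal (?G (t k / 2) - ?G (t k / 4))"
        using f0 by (rule ennreal_mult')
      finally show ?thesis .
    qed
    ultimately show ?thesis by (metis order_trans)
  qed
  have G_inf: "\<not> lorentz_norm (\<lambda>t. t powr p) f < \<infinity>"
  proof
    assume "lorentz_norm (\<lambda>t. t powr p) f < \<infinity>"
    then obtain r where r: "lorentz_norm (\<lambda>t. t powr p) f = ennreal r" "0 \<le> r"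
      by (cases "lorentz_norm (\<lambda>t. t powr p) f") auto
    obtain k where k: "r / c0 < 2 ^ k" using real_arch_pow[of "2::real" "r / c0"] by auto
    have "r < 2 ^ k * c0" using k c0 by (simp add: divide_less_eq)
    moreover have "2 ^ k * c0 \<le> r" using lowb[of k] r by (simp add: ennreal_le_iff)
    ultimately show False by simp
  qed
  have "f \<in> Lorentz_space \<psi> \<inter> Linfty_pos" using f_meas F_fin f_inf by (simp add: Lorentz_space_def)
  moreover have "f \<notin> Lorentz_n1 n" using G_inf unfolding Lorentz_n1_def Lorentz_space_def p_def by simp
  ultimately show ?thesis by blast
qed

theorem lemma4p4:
  fixes \<psi> :: "real \<Rightarrow> real" and n :: nat
  assumes "n \<ge> 1"
    and "mono_on {0..} \<psi>" and "concave_on {0..} \<psi>" and "\<psi> 0 = 0"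
  shows "(\<not> (Lorentz_space \<psi> \<inter> Linfty_pos \<subseteq> Lorentz_n1 n)
            \<longleftrightarrow> Liminf at_top (\<lambda>t. ereal (\<psi> t / t powr (1 / real n))) = 0)
       \<and> (Liminf at_top (\<lambda>t. ereal (\<psi> t / t powr (1 / real n))) = 0
            \<longleftrightarrow> liminf (\<lambda>m. ereal (\<psi> (2 ^ (m * n)) / 2 ^ m)) = 0)"
proof -
  note n = assms(1) and mono = assms(2) and z = assms(4)
  let ?g = "\<lambda>t. \<psi> t / t powr (1 / real n)"
  let ?h = "\<lambda>m. \<psi> (2 ^ (m * n)) / 2 ^ m"
  have psi_nn: "0 \<le> \<psi> t" if "0 \<le> t" for t using mono_onD[OF mono, of 0 t] z that by simp
  have evg: "eventually (\<lambda>t. 0 \<le> ereal (?g t)) at_top"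
    unfolding eventually_at_top_linorder
    by (rule exI[of _ 0]) (auto intro!: divide_nonneg_nonneg psi_nn)
  have evh: "eventually (\<lambda>m. 0 \<le> ereal (?h m)) sequentially"
    by (rule always_eventually) (auto intro!: divide_nonneg_nonneg psi_nn)
  have L: "Liminf at_top (\<lambda>t. ereal (?g t)) = 0 \<longleftrightarrow> \<not> (\<exists>c>0. eventually (\<lambda>t. c < ?g t) at_top)"
    using Liminf_zero_iff[OF _ evg] by simp
  have l: "liminf (\<lambda>m. ereal (?h m)) = 0 \<longleftrightarrow> \<not> (\<exists>c>0. eventually (\<lambda>m. c < ?h m) sequentially)"
    using Liminf_zero_iff[OF _ evh] by simp
  have part2: "Liminf at_top (\<lambda>t. ereal (?g t)) = 0 \<longleftrightarrow> liminf (\<lambda>m. ereal (?h m)) = 0"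
    unfolding L l using gh_equiv[OF n mono z] by simp
  have part1: "(Lorentz_space \<psi> \<inter> Linfty_pos \<subseteq> Lorentz_n1 n) \<longleftrightarrow> (\<exists>c>0. eventually (\<lambda>t. c < ?g t) at_top)"
  proof
    assume incl0: "Lorentz_space \<psi> \<inter> Linfty_pos \<subseteq> Lorentz_n1 n"
    show "\<exists>c>0. eventually (\<lambda>t. c < ?g t) at_top"
    proof (rule ccontr)
      assume nc: "\<not> (\<exists>c>0. eventually (\<lambda>t. c < ?g t) at_top)"
      have "\<exists>t\<ge>T. ?g t \<le> c" if "c > 0" for c T
      proof -
        have "\<not> eventually (\<lambda>t. c < ?g t) at_top" using nc that by blast
        then show ?thesis unfolding eventually_at_top_linorder by (auto simp: not_less)
      qed
      then have "\<not> (Lorentz_space \<psi> \<inter> Linfty_pos \<subseteq> Lorentz_n1 n)"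
        by (intro nonincl[OF n mono z]) auto
      then show False using incl0 by blast
    qed
  next
    assume "\<exists>c>0. eventually (\<lambda>t. c < ?g t) at_top"
    then obtain c T0 where c: "c > 0" "\<And>t. t \<ge> T0 \<Longrightarrow> c < ?g t"
      unfolding eventually_at_top_linorder by blast
    define T where "T = max T0 1"
    have T: "T \<ge> 1" unfolding T_def by simp
    have cT: "c * t powr (1 / real n) < \<psi> t" if "t \<ge> T" for t
    proof -
      have "0 < t powr (1 / real n)" using that T by simp
      moreover have "c < ?g t" using that c(2) unfolding T_def by simp
      ultimately show ?thesis by (simp add: field_simps)
    qed
    show "Lorentz_space \<psi> \<inter> Linfty_pos \<subseteq> Lorentz_n1 n"
    proof
      fix f assume "f \<in> Lorentz_space \<psi> \<inter> Linfty_pos"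
      then have fm: "f \<in> measurable_pos" and fin: "lorentz_norm \<psi> f < \<infinity>"
        and bd: "\<exists>C. AE x in lborel. x > 0 \<longrightarrow> \<bar>f x\<bar> \<le> C"
        unfolding Lorentz_space_def Linfty_pos_def by auto
      from bd obtain C where C: "AE x in lborel. x > 0 \<longrightarrow> \<bar>f x\<bar> \<le> C" by blast
      have "lorentz_norm (\<lambda>t. t powr (1 / real n)) f < \<infinity>"
        by (rule incl[OF n mono z c(1) T cT fin C])
      then show "f \<in> Lorentz_n1 n" using fm unfolding Lorentz_n1_def Lorentz_space_def by simp
    qed
  qed
  show ?thesis using part1 part2 L by blast
qed

end
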